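(* Let $(V_k)_{k=1,\dots,K}$ be a $\sigma$-admissible family of affine spaces for some $\sigma>0$. For $w\in W$ let $u_k^*(w)$, $k=1,\dots,K$, be the PBDW estimators, and define $u^*(w)=u^*_{k^*}(w)$. (i) If $k^*=k^*(w)$ is any minimizer of $k\mapsto\operatorname{dist}(u_k^*(w),\mathcal M)$ over $\{1,\dots,K\}$, then $$\sup_{u\in\mathcal M}\|u-u^*(P_Wu)\|\le\delta_\sigma.$$ (ii) If $\mathcal S:V\to[0,\infty)$ satisfies $r\operatorname{dist}(v,\mathcal M)\le\mathcal S(v)\le R\operatorname{dist}(v,\mathcal M)$ for all $v\in V$ with constants $0<r\le R$, and $k^*=k^*(w)$ is any minimizer of $k\mapsto\mathcal S(u_k^*(w))$, then $$\sup_{u\in\mathcal M}\|u-u^*(P_Wu)\|\le\delta_{\kappa\sigma},\qquad\kappa=R/r.$$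
   Context: $V$ is a real Hilbert space, $\mathcal M\subset V$ is compact, $W\subset V$ is a subspace of finite dimension $m$, $P_W$ is the orthogonal projection onto $W$ and $W^\perp$ its orthogonal complement. For a linear subspace $\bar V$ with $\bar V\cap W^\perp=\{0\}$, $\mu(\bar V,W)=\max_{v\in\bar V,\,v\ne0}\|v\|/\|P_Wv\|$ (set $\mu(\{0\},W)=1$). A family of affine spaces $V_k=\bar u_k+\bar V_k$ ($\bar u_k\in V$, $\bar V_k$ linear of dimension $n_k\le m$, $\bar V_k\cap W^\perp=\{0\}$), $k=1,\dots,K$, is $\sigma$-admissible if there is a partition $\mathcal M=\bigcup_{k=1}^K\mathcal M_k$ and numbers $\varepsilon_k$ with $\operatorname{dist}(\mathcal M_k,V_k):=\sup_{u\in\mathcal M_k}\operatorname{dist}(u,V_k)\le\varepsilon_k$ and $\mu(\bar V_k,W)\,\varepsilon_k\le\sigma$ for all $k$. The PBDW estimators are $u_k^*(w)=\operatorname{argmin}\{\operatorname{dist}(v,V_k): v\in w+W^\perp\}$. For $\sigma\ge0$, $\mathcal M_\sigma=\{v\in V:\operatorname{dist}(v,\mathcal M)\le\sigma\}$ and $\delta_\sigma=\sup\{\|u-v\|: u,v\in\mathcal M_\sigma,\ u-v\in W^\perp\}$. *)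

theory Defs
  imports "HOL-Analysis.Analysis"
begin

(* V is modelled by a type 'a :: {real_inner, complete_space} (real Hilbert space). *)

definition fin_dim_subspace :: "'a::real_vector set \<Rightarrow> nat \<Rightarrow> bool" where
  "fin_dim_subspace S n \<longleftrightarrow> subspace S \<and>
     (\<exists>B. finite B \<and> independent B \<and> span B = S \<and> card B = n)"

definition orth_proj :: "'a::real_inner set \<Rightarrow> 'a \<Rightarrow> 'a" where
  "orth_proj W v = (THE w. w \<in> W \<and> v - w \<in> orthogonal_comp W)"

definition mu :: "'a::real_inner set \<Rightarrow> 'a set \<Rightarrow> real" where
  "mu Vb W = (if Vb = {0} then 1
     else Sup {norm v / norm (orth_proj W v) | v. v \<in> Vb \<and> v \<noteq> 0})"

(* sigma-admissible family V_k = ubar k + Vbar k, k = 1..K *)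
definition sigma_admissible ::
  "'a::real_inner set \<Rightarrow> 'a set \<Rightarrow> nat \<Rightarrow> (nat \<Rightarrow> 'a) \<Rightarrow> (nat \<Rightarrow> 'a set) \<Rightarrow> real \<Rightarrow> bool" where
  "sigma_admissible M W K ubar Vbar \<sigma> \<longleftrightarrow>
     (\<exists>m. fin_dim_subspace W m \<and>
        (\<forall>k\<in>{1..K}. (\<exists>n\<le>m. fin_dim_subspace (Vbar k) n) \<and>
                     Vbar k \<inter> orthogonal_comp W = {0})) \<and>
     (\<exists>Mk :: nat \<Rightarrow> 'a set. \<exists>eps :: nat \<Rightarrow> real.
        (\<Union>k\<in>{1..K}. Mk k) = M \<and> disjoint_family_on Mk {1..K} \<and>
        (\<forall>k\<in>{1..K}. (\<forall>u\<in>Mk k. infdist u ((\<lambda>x. ubar k + x) ` Vbar k) \<le> eps k) \<and>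
                     mu (Vbar k) W * eps k \<le> \<sigma>))"

definition is_PBDW :: "'a::real_inner set \<Rightarrow> 'a set \<Rightarrow> 'a \<Rightarrow> 'a \<Rightarrow> bool" where
  "is_PBDW W Vk w x \<longleftrightarrow> x \<in> (\<lambda>y. w + y) ` orthogonal_comp W \<and>
     (\<forall>v\<in>(\<lambda>y. w + y) ` orthogonal_comp W. infdist x Vk \<le> infdist v Vk)"

definition M_sigma :: "'a::metric_space set \<Rightarrow> real \<Rightarrow> 'a set" where
  "M_sigma M \<sigma> = {v. infdist v M \<le> \<sigma>}"

definition delta :: "'a::real_inner set \<Rightarrow> 'a set \<Rightarrow> real \<Rightarrow> real" where
  "delta M W \<sigma> = Sup {norm (u - v) | u v. u \<in> M_sigma M \<sigma> \<and> v \<in> M_sigma M \<sigma> \<and>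
                                         u - v \<in> orthogonal_comp W}"

end

theory Submission
  imports Defs
begin

lemma GS_step:
  fixes S :: "'a::real_inner set"
  assumes fin: "finite S" and S: "pairwise orthogonal S" and x: "x \<in> span S"
  shows "orthogonal x (a - (\<Sum>b\<in>S. (b \<bullet> a / (b \<bullet> b)) *\<^sub>R b))"
proof -
  have "orthogonal (a - (\<Sum>b\<in>S. (b \<bullet> a / (b \<bullet> b)) *\<^sub>R b)) x"
       if "x \<in> S" for x
  proof -
    have "a \<bullet> x = (\<Sum>y\<in>S. if y = x then y \<bullet> a else 0)"
      by (simp add: fin inner_commute that)
    also have "\<dots> =  (\<Sum>b\<in>S. b \<bullet> a * (b \<bullet> x) / (b \<bullet> b))"
      apply (rule sum.cong [OF refl], simp)
      by (meson S orthogonal_def pairwise_def that)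
   finally show ?thesis
     by (simp add: orthogonal_def algebra_simps inner_sum_left)
  qed
  then show ?thesis
    using orthogonal_to_span orthogonal_commute x by blast
qed

lemma orth_ext_aux:
  fixes S :: "'a::real_inner set"
  assumes "finite T" "finite S" "pairwise orthogonal S"
    shows "\<exists>U. finite U \<and> pairwise orthogonal (S \<union> U) \<and> span (S \<union> U) = span (S \<union> T)"
using assms
proof (induction arbitrary: S)
  case empty then show ?case
    by (rule_tac x="{}" in exI) simp
next
  case (insert a T)
  have 0: "\<And>x y. \<lbrakk>x \<noteq> y; x \<in> S; y \<in> S\<rbrakk> \<Longrightarrow> x \<bullet> y = 0"
    using insert by (simp add: pairwise_def orthogonal_def)
  define a' where "a' = a - (\<Sum>b\<in>S. (b \<bullet> a / (b \<bullet> b)) *\<^sub>R b)"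
  have orthS: "\<And>x. x \<in> S \<Longrightarrow> a' \<bullet> x = 0"
    using GS_step a'_def insert.prems orthogonal_commute orthogonal_def span_base by blast
  have po: "pairwise orthogonal (insert a' S)"
    unfolding pairwise_insert using insert.prems(2) orthS
    by (auto simp: orthogonal_def[abs_def] inner_commute[of a'] simp del: pairwise_def)
  obtain U where finU: "finite U" and orthU: "pairwise orthogonal (insert a' S \<union> U)"
             and spanU: "span (insert a' S \<union> U) = span (insert a' S \<union> T)"
    using insert.IH [of "insert a' S"] po insert.prems by auto
  have "span (S \<union> insert a' U) = span (insert a' (S \<union> T))"
    using spanU by simp
  also have "\<dots> = span (insert a (S \<union> T))"
    by (simp add: a'_def span_neg span_sum span_base span_mul eq_span_insert_eq)
  also have "\<dots> = span (S \<union> insert a T)"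
    by simp
  finally show ?case
    using orthU finU by (rule_tac x="insert a' U" in exI) auto
qed

lemma orth_basis:
  fixes T :: "'a::real_inner set"
  assumes "finite T"
  obtains U where "finite U" "pairwise orthogonal U" "span U = span T"
  using orth_ext_aux[of T "{}"] assms by auto

lemma proj_exists:
  fixes T :: "'a::real_inner set"
  assumes "finite T"
  shows "\<exists>p\<in>span T. v - p \<in> orthogonal_comp (span T)"
proof -
  obtain U where U: "finite U" "pairwise orthogonal U" "span U = span T"
    using orth_basis assms by blast
  define p where "p = (\<Sum>b\<in>U. (b \<bullet> v / (b \<bullet> b)) *\<^sub>R b)"
  have "p \<in> span U" unfolding p_def by (intro span_sum span_mul span_base)
  moreover have "\<forall>y\<in>span U. orthogonal y (v - p)"
    using GS_step[OF U(1,2)] p_def by blast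
  ultimately show ?thesis using U(3) by (auto simp: orthogonal_comp_def)
qed

lemma proj_unique:
  fixes W :: "'a::real_inner set"
  assumes "subspace W" "w1 \<in> W" "v - w1 \<in> orthogonal_comp W" "w2 \<in> W" "v - w2 \<in> orthogonal_comp W"
  shows "w1 = w2"
proof -
  have "w1 - w2 \<in> W" using assms by (simp add: subspace_diff)
  moreover have "w1 - w2 = (v - w2) - (v - w1)" by simp
  hence "w1 - w2 \<in> orthogonal_comp W"
    using assms subspace_orthogonal_comp subspace_diff by metis
  ultimately have "(w1 - w2) \<bullet> (w1 - w2) = 0"
    by (auto simp: orthogonal_comp_def orthogonal_def)
  thus ?thesis by simp
qed

locale fdsub =
  fixes W :: "'a::real_inner set" and T :: "'a set"
  assumes finT: "finite T" and WT: "W = span T"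
begin

lemma sub: "subspace W" using WT by simp

lemma P_char: "orth_proj W v \<in> W \<and> v - orth_proj W v \<in> orthogonal_comp W"
proof -
  obtain p where "p \<in> W" "v - p \<in> orthogonal_comp W" using proj_exists[OF finT] WT by blast
  then have "\<exists>!w. w \<in> W \<and> v - w \<in> orthogonal_comp W" using proj_unique[OF sub] by blast
  then show ?thesis unfolding orth_proj_def by (rule theI')
qed

lemma P_in: "orth_proj W v \<in> W" using P_char by blast
lemma P_perp: "v - orth_proj W v \<in> orthogonal_comp W" using P_char by blast

lemma P_eq: "w \<in> W \<Longrightarrow> v - w \<in> orthogonal_comp W \<Longrightarrow> orth_proj W v = w"
  using proj_unique[OF sub] P_in P_perp by blast

lemma P_lin: "linear (orth_proj W)"
proof (rule linearI)
  fix x y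
  show "orth_proj W (x + y) = orth_proj W x + orth_proj W y"
  proof (rule P_eq)
    show "orth_proj W x + orth_proj W y \<in> W" using P_in sub by (simp add: subspace_add)
    have "x + y - (orth_proj W x + orth_proj W y) = (x - orth_proj W x) + (y - orth_proj W y)" by simp
    then show "x + y - (orth_proj W x + orth_proj W y) \<in> orthogonal_comp W"
      using P_perp subspace_orthogonal_comp subspace_add by metis
  qed
next
  fix c :: real and x
  show "orth_proj W (c *\<^sub>R x) = c *\<^sub>R orth_proj W x"
  proof (rule P_eq)
    show "c *\<^sub>R orth_proj W x \<in> W" using P_in sub by (simp add: subspace_scale)
    have "c *\<^sub>R x - c *\<^sub>R orth_proj W x = c *\<^sub>R (x - orth_proj W x)" by (simp add: algebra_simps)
    then show "c *\<^sub>R x - c *\<^sub>R orth_proj W x \<in> orthogonal_comp W"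
      using P_perp subspace_orthogonal_comp subspace_scale by metis
  qed
qed

lemma P_diff: "orth_proj W (x - y) = orth_proj W x - orth_proj W y"
  using P_lin by (simp add: linear_diff)

lemma perp_orth: "a \<in> W \<Longrightarrow> b \<in> orthogonal_comp W \<Longrightarrow> orthogonal a b"
  by (auto simp: orthogonal_comp_def)

lemma pyth: "(norm v)\<^sup>2 = (norm (orth_proj W v))\<^sup>2 + (norm (v - orth_proj W v))\<^sup>2"
  using norm_add_Pythagorean[OF perp_orth[OF P_in P_perp], of v v] by simp

lemma P_zero_iff: "orth_proj W y = 0 \<longleftrightarrow> y \<in> orthogonal_comp W"
proof
  assume "orth_proj W y = 0" thus "y \<in> orthogonal_comp W" using P_perp[of y] by simp
next
  assume "y \<in> orthogonal_comp W" thus "orth_proj W y = 0"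
    using P_eq[of 0 y] sub by (simp add: subspace_0)
qed

lemma closest:
  fixes ub x :: 'a
  shows "\<exists>vs\<in>(\<lambda>y. ub + y) ` W. \<forall>v\<in>(\<lambda>y. ub + y) ` W. norm (x - vs) \<le> norm (x - v)"
proof -
  let ?p = "orth_proj W (x - ub)"
  have "\<forall>v\<in>(\<lambda>y. ub + y) ` W. norm (x - (ub + ?p)) \<le> norm (x - v)"
  proof
    fix v assume "v \<in> (\<lambda>y. ub + y) ` W"
    then obtain z where z: "z \<in> W" "v = ub + z" by auto
    have e: "x - v = ((x - ub) - ?p) + (?p - z)" using z by simp
    have "?p - z \<in> W" using P_in z sub by (simp add: subspace_diff)
    hence "orthogonal ((x - ub) - ?p) (?p - z)"
      using perp_orth P_perp orthogonal_commute by blast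
    hence "(norm (x - v))\<^sup>2 = (norm ((x - ub) - ?p))\<^sup>2 + (norm (?p - z))\<^sup>2"
      using e norm_add_Pythagorean by metis
    hence "(norm ((x - ub) - ?p))\<^sup>2 \<le> (norm (x - v))\<^sup>2" by simp
    hence "norm ((x - ub) - ?p) \<le> norm (x - v)" using power2_le_imp_le by fastforce
    thus "norm (x - (ub + ?p)) \<le> norm (x - v)" by (simp add: algebra_simps)
  qed
  moreover have "ub + ?p \<in> (\<lambda>y. ub + y) ` W" using P_in by blast
  ultimately show ?thesis by blast
qed

end


lemma le_infdist_lemma:
  assumes "A \<noteq> {}" "\<And>a. a \<in> A \<Longrightarrow> c \<le> dist x a"
  shows "c \<le> infdist x A"
  using assms by (simp add: infdist_notempty cINF_greatest)

context fdsub
begin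

lemma inv_bound:
  assumes finB: "finite B" and VB: "Vb = span B" and inter: "Vb \<inter> orthogonal_comp W = {0}"
  shows "\<exists>C. \<forall>d\<in>Vb. norm d \<le> C * norm (orth_proj W d)"
proof -
  let ?P = "orth_proj W"
  have Z: "?P ` Vb = span (?P ` B)" using VB span_linear_image[OF P_lin] by simp
  obtain U where U: "finite U" "pairwise orthogonal U" "span U = span (?P ` B)"
    using orth_basis[of "?P ` B"] finB by blast
  have "\<forall>e\<in>U. \<exists>d. d \<in> Vb \<and> ?P d = e"
  proof
    fix e assume "e \<in> U"
    hence "e \<in> ?P ` Vb" using U(3) Z span_base by blast
    thus "\<exists>d. d \<in> Vb \<and> ?P d = e" by blast
  qed
  from bchoice[OF this] obtain g where g0: "\<forall>e\<in>U. g e \<in> Vb \<and> ?P (g e) = e" by blast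
  hence g: "\<And>e. e \<in> U \<Longrightarrow> g e \<in> Vb \<and> ?P (g e) = e" by blast
  define C where "C = (\<Sum>e\<in>U. (if e = 0 then 0 else norm (g e) / norm e))"
  have "norm d \<le> C * norm (?P d)" if d: "d \<in> Vb" for d
  proof -
    define z where "z = ?P d"
    define c where "c e = (e \<bullet> z) / (e \<bullet> e)" for e
    define z' where "z' = (\<Sum>e\<in>U. c e *\<^sub>R e)"
    have zU: "z \<in> span U" using z_def d Z U(3) by auto
    have z'U: "z' \<in> span U" unfolding z'_def by (intro span_sum span_mul span_base)
    have h: "z - z' \<in> span U" using zU z'U by (simp add: span_diff)
    have z'e: "z' = (\<Sum>b\<in>U. (b \<bullet> z / (b \<bullet> b)) *\<^sub>R b)" by (simp add: z'_def c_def)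
    have "orthogonal (z - z') (z - z')"
      using GS_step[OF U(1,2) h, of z] z'e by simp
    hence zz: "z = z'" by (simp add: orthogonal_def)
    define d' where "d' = (\<Sum>e\<in>U. c e *\<^sub>R g e)"
    have sVb: "subspace Vb" using VB by simp
    have d'V: "d' \<in> Vb" unfolding d'_def
      using g sVb by (intro subspace_sum[OF sVb]) (auto intro: subspace_scale)
    have "?P d' = (\<Sum>e\<in>U. c e *\<^sub>R ?P (g e))"
      unfolding d'_def using P_lin by (simp add: linear_sum linear_scale)
    also have "\<dots> = z'" unfolding z'_def using g by (intro sum.cong) auto
    finally have "?P (d - d') = 0" using zz z_def P_diff by simp
    hence "d - d' \<in> orthogonal_comp W" using P_zero_iff by blast
    moreover have "d - d' \<in> Vb" using d d'V sVb by (simp add: subspace_diff)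
    ultimately have "d - d' \<in> Vb \<inter> orthogonal_comp W" by blast
    hence "d - d' = 0" using inter by blast
    hence "norm d = norm d'" by simp
    also have "\<dots> \<le> (\<Sum>e\<in>U. norm (c e *\<^sub>R g e))" unfolding d'_def by (rule norm_sum)
    also have "\<dots> \<le> (\<Sum>e\<in>U. norm z * (if e = 0 then 0 else norm (g e) / norm e))"
    proof (rule sum_mono)
      fix e assume "e \<in> U"
      show "norm (c e *\<^sub>R g e) \<le> norm z * (if e = 0 then 0 else norm (g e) / norm e)"
      proof (cases "e = 0")
        case True thus ?thesis by (simp add: c_def)
      next
        case False
        have ee: "e \<bullet> e = (norm e)\<^sup>2" by (simp add: power2_norm_eq_inner)
        have ne: "norm e > 0" using False by simp
        have "\<bar>e \<bullet> z\<bar> \<le> norm e * norm z" by (rule Cauchy_Schwarz_ineq2)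
        hence "\<bar>c e\<bar> \<le> norm z / norm e" unfolding c_def ee using ne
          by (simp add: abs_div power2_eq_square field_simps)
        hence "\<bar>c e\<bar> * norm (g e) \<le> norm z / norm e * norm (g e)"
          by (intro mult_right_mono) auto
        thus ?thesis using False by simp
      qed
    qed
    also have "\<dots> = norm z * C" unfolding C_def by (simp add: sum_distrib_left)
    finally show ?thesis using z_def by (simp add: mult.commute)
  qed
  thus ?thesis by blast
qed

lemma mu_bound:
  assumes finB: "finite B" and VB: "Vb = span B" and inter: "Vb \<inter> orthogonal_comp W = {0}"
  shows "\<And>d. d \<in> Vb \<Longrightarrow> norm d \<le> mu Vb W * norm (orth_proj W d)" and "mu Vb W \<ge> 1"
proof -
  let ?P = "orth_proj W"
  let ?S = "{norm v / norm (?P v) | v. v \<in> Vb \<and> v \<noteq> 0}"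
  obtain C where C: "\<And>d. d \<in> Vb \<Longrightarrow> norm d \<le> C * norm (?P d)" using inv_bound[OF assms] by blast
  have Pnz: "?P v \<noteq> 0" if "v \<in> Vb" "v \<noteq> 0" for v
    using that inter P_zero_iff by blast
  have bdd: "bdd_above ?S"
  proof (rule bdd_aboveI)
    fix s assume "s \<in> ?S"
    then obtain v where v: "s = norm v / norm (?P v)" "v \<in> Vb" "v \<noteq> 0" by blast
    have "norm (?P v) > 0" using Pnz v by simp
    thus "s \<le> C" using C[OF v(2)] v(1) by (simp add: divide_le_eq)
  qed
  have Ple: "norm (?P v) \<le> norm v" for v
    using pyth[of v] by (metis le_add_same_cancel1 norm_ge_zero power2_le_imp_le zero_le_power2)
  show "\<And>d. d \<in> Vb \<Longrightarrow> norm d \<le> mu Vb W * norm (?P d)"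
  proof -
    fix d assume d: "d \<in> Vb"
    show "norm d \<le> mu Vb W * norm (?P d)"
    proof (cases "d = 0")
      case True thus ?thesis by (simp add: P_lin linear_0)
    next
      case False
      hence "Vb \<noteq> {0}" using d by auto
      hence mu: "mu Vb W = Sup ?S" unfolding mu_def by simp
      have "norm d / norm (?P d) \<le> Sup ?S" using d False bdd by (intro cSup_upper) auto
      moreover have "norm (?P d) > 0" using Pnz d False by simp
      ultimately show ?thesis using mu by (simp add: divide_le_eq mult.commute)
    qed
  qed
  show "mu Vb W \<ge> 1"
  proof (cases "Vb = {0}")
    case True thus ?thesis by (simp add: mu_def)
  next
    case False
    have "0 \<in> Vb" using VB by (simp add: span_zero)
    then obtain v where v: "v \<in> Vb" "v \<noteq> 0" using False by blast
    have "norm (?P v) > 0" using Pnz v by simp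
    hence "1 \<le> norm v / norm (?P v)" using Ple[of v] by simp
    also have "\<dots> \<le> Sup ?S" using v bdd by (intro cSup_upper) auto
    finally show ?thesis using False by (simp add: mu_def)
  qed
qed

end

lemma alg:
  fixes a b X mu :: real
  assumes "0 \<le> a" "0 \<le> b" "0 \<le> X" "1 \<le> mu" "X\<^sup>2 \<le> (mu\<^sup>2 - 1) * a\<^sup>2"
  shows "(b + X)\<^sup>2 \<le> mu\<^sup>2 * (a\<^sup>2 + b\<^sup>2)"
proof -
  define s where "s = sqrt (mu\<^sup>2 - 1)"
  have m: "mu\<^sup>2 - 1 \<ge> 0" using one_le_power[OF assms(4), of 2] by simp
  have s2: "s\<^sup>2 = mu\<^sup>2 - 1" unfolding s_def using real_sqrt_pow2[OF m] .
  have s0: "s \<ge> 0" using s_def m by simp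
  have "(s * a)\<^sup>2 = (mu\<^sup>2 - 1) * a\<^sup>2" by (simp only: power_mult_distrib s2)
  hence "X\<^sup>2 \<le> (s * a)\<^sup>2" using assms(5) by linarith
  hence Xs: "X \<le> s * a" using power2_le_imp_le mult_nonneg_nonneg[OF s0 assms(1)] by blast
  have "b + X \<le> b + s * a" using Xs by linarith
  moreover have "0 \<le> b + X" using assms(2,3) by linarith
  ultimately have "(b + X)\<^sup>2 \<le> (b + s * a)\<^sup>2" by (rule power_mono)
  also have "\<dots> \<le> (1 + s\<^sup>2) * (a\<^sup>2 + b\<^sup>2)"
  proof -
    have "(1 + s\<^sup>2) * (a\<^sup>2 + b\<^sup>2) - (b + s * a)\<^sup>2 = (s*b - a)\<^sup>2" by algebra
    thus ?thesis by (metis diff_ge_0_iff_ge zero_le_power2)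
  qed
  also have "\<dots> = mu\<^sup>2 * (a\<^sup>2 + b\<^sup>2)" using s2 by simp
  finally show ?thesis .
qed

context fdsub
begin

lemma core:
  assumes finB: "finite B" and VB: "Vb = span B" and inter: "Vb \<inter> orthogonal_comp W = {0}"
    and pb: "is_PBDW W ((\<lambda>y. ub + y) ` Vb) (orth_proj W u) x"
  shows "norm (u - x) \<le> mu Vb W * infdist u ((\<lambda>y. ub + y) ` Vb)"
proof -
  interpret V: fdsub Vb B using finB VB by unfold_locales
  let ?P = "orth_proj W"
  let ?VK = "(\<lambda>y. ub + y) ` Vb"
  define w where "w = ?P u"
  define \<mu> where "\<mu> = mu Vb W"
  have mu1: "\<mu> \<ge> 1" using mu_bound(2)[OF finB VB inter] \<mu>_def by simp
  have mub: "\<And>d. d \<in> Vb \<Longrightarrow> norm d \<le> \<mu> * norm (?P d)" using mu_bound(1)[OF finB VB inter] \<mu>_def by simp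
  have sVb: "subspace Vb" using VB by simp
  have "0 \<in> Vb" using sVb by (rule subspace_0)
  hence VKne: "?VK \<noteq> {}" by blast
  from pb have xin: "x \<in> (\<lambda>y. w + y) ` orthogonal_comp W"
    and xmin: "\<And>v. v \<in> (\<lambda>y. w + y) ` orthogonal_comp W \<Longrightarrow> infdist x ?VK \<le> infdist v ?VK"
    unfolding is_PBDW_def w_def by auto
  obtain y0 where y0: "y0 \<in> orthogonal_comp W" "x = w + y0" using xin by blast
  have Px: "?P x = w" using y0 w_def P_in by (intro P_eq) auto
  have h2: "infdist x ?VK \<le> norm (?P (u - v))" if v: "v \<in> ?VK" for v
  proof -
    define x' where "x' = w + (v - ?P v)"
    have "x' \<in> (\<lambda>y. w + y) ` orthogonal_comp W" unfolding x'_def using P_perp by blast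
    hence "infdist x ?VK \<le> infdist x' ?VK" by (rule xmin)
    also have "\<dots> \<le> dist x' v" using v by (rule infdist_le)
    also have "\<dots> = norm (?P (u - v))" unfolding x'_def w_def dist_norm P_diff
      by (simp add: algebra_simps)
    finally show ?thesis .
  qed
  obtain vs where vs: "vs \<in> ?VK" "\<And>v. v \<in> ?VK \<Longrightarrow> norm (x - vs) \<le> norm (x - v)"
    using V.closest[of ub x] by blast
  have h3: "norm (x - vs) \<le> infdist x ?VK"
    using VKne vs(2) by (intro le_infdist_lemma) (auto simp: dist_norm)
  have h4: "\<And>v. v \<in> ?VK \<Longrightarrow> norm (x - vs) \<le> norm (?P (u - v))" using h3 h2 by fastforce
  have Pxv: "?P (x - vs) = ?P (u - vs)" using P_diff Px w_def by simp
  have py: "(norm (x - vs))\<^sup>2 = (norm (?P (u - vs)))\<^sup>2 + (norm ((x - vs) - ?P (x - vs)))\<^sup>2"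
    using pyth[of "x - vs"] Pxv by simp
  have "(norm (x - vs))\<^sup>2 \<le> (norm (?P (u - vs)))\<^sup>2"
    using h4[OF vs(1)] by (simp add: power_mono)
  hence "(norm ((x - vs) - ?P (x - vs)))\<^sup>2 \<le> 0" using py by simp
  hence "x - vs = ?P (x - vs)" by simp
  define p where "p = ?P (u - vs)"
  have xvs: "x = vs + p" using \<open>x - vs = ?P (x - vs)\<close> Pxv p_def by (simp add: algebra_simps)
  have hp: "\<And>v. v \<in> ?VK \<Longrightarrow> norm p \<le> norm (?P (u - v))" using h4 xvs by simp
  obtain zs where zs: "zs \<in> Vb" "vs = ub + zs" using vs(1) by blast
  have main: "norm (u - x) \<le> \<mu> * dist u v0" if v0: "v0 \<in> ?VK" for v0
  proof -
    obtain z0 where z0: "z0 \<in> Vb" "v0 = ub + z0" using v0 by blast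
    define d where "d = v0 - vs"
    have dV: "d \<in> Vb" using z0 zs sVb d_def by (simp add: subspace_diff)
    define q where "q = ?P d"
    have pq: "p \<bullet> q = 0"
    proof (cases "q = 0")
      case True thus ?thesis by simp
    next
      case False
      define t where "t = (p \<bullet> q) / (q \<bullet> q)"
      have qq: "q \<bullet> q > 0" using False by simp
      have "vs + t *\<^sub>R d \<in> ?VK" using zs dV sVb
        by (auto intro!: image_eqI[where x="zs + t *\<^sub>R d"] subspace_add subspace_scale)
      hence "norm p \<le> norm (?P (u - (vs + t *\<^sub>R d)))" by (rule hp)
      also have "?P (u - (vs + t *\<^sub>R d)) = p - t *\<^sub>R q"
        using P_lin unfolding p_def q_def by (simp add: linear_diff linear_add linear_scale algebra_simps)
      finally have "(norm p)\<^sup>2 \<le> (norm (p - t *\<^sub>R q))\<^sup>2" by (simp add: power_mono)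
      hence "p \<bullet> p \<le> (p - t *\<^sub>R q) \<bullet> (p - t *\<^sub>R q)" by (simp add: power2_norm_eq_inner)
      hence "0 \<le> - 2 * t * (p \<bullet> q) + t * t * (q \<bullet> q)"
        by (simp add: inner_diff_left inner_diff_right inner_commute algebra_simps)
      hence "0 \<le> - (p \<bullet> q) * (p \<bullet> q) / (q \<bullet> q)" using qq unfolding t_def
        by (simp add: field_simps power2_eq_square)
      hence "(p \<bullet> q) * (p \<bullet> q) \<le> 0" using qq by (simp add: divide_le_0_iff)
      thus ?thesis by (auto simp: mult_le_0_iff)
    qed
    have Puv0: "?P (u - v0) = p - q"
    proof -
      have "u - v0 = (u - vs) - d" unfolding d_def by simp
      have "?P (u - v0) = ?P ((u - vs) - d)" by (rule arg_cong[where f="?P"]) (simp add: d_def)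
      also have "\<dots> = p - q" unfolding p_def q_def by (rule P_diff)
      finally show ?thesis .
    qed
    define a where "a = norm (p - q)"
    have "orthogonal p (- q)" using pq by (simp add: orthogonal_def)
    hence "(norm (p + - q))\<^sup>2 = (norm p)\<^sup>2 + (norm (- q))\<^sup>2" by (rule norm_add_Pythagorean)
    hence qa: "(norm q)\<^sup>2 \<le> a\<^sup>2" unfolding a_def by simp
    define r0 where "r0 = (u - v0) - ?P (u - v0)"
    define b where "b = norm r0"
    have uv0: "(norm (u - v0))\<^sup>2 = a\<^sup>2 + b\<^sup>2" using pyth[of "u - v0"] Puv0 a_def b_def r0_def by simp
    have ux: "u - x = r0 + (d - q)" unfolding r0_def Puv0 xvs d_def by (simp add: algebra_simps)
    define X where "X = norm (d - q)"
    have dq: "(norm d)\<^sup>2 = (norm q)\<^sup>2 + X\<^sup>2" using pyth[of d] q_def X_def by simp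
    have "norm d \<le> \<mu> * norm q" using mub[OF dV] q_def by simp
    hence "(norm d)\<^sup>2 \<le> (\<mu> * norm q)\<^sup>2" by (simp add: power_mono)
    hence "X\<^sup>2 \<le> (\<mu>\<^sup>2 - 1) * (norm q)\<^sup>2" using dq by (simp add: power_mult_distrib algebra_simps)
    also have "\<dots> \<le> (\<mu>\<^sup>2 - 1) * a\<^sup>2" using qa mu1 by (intro mult_left_mono) (auto simp: one_le_power)
    finally have X2: "X\<^sup>2 \<le> (\<mu>\<^sup>2 - 1) * a\<^sup>2" .
    have "(b + X)\<^sup>2 \<le> \<mu>\<^sup>2 * (a\<^sup>2 + b\<^sup>2)"
      by (rule alg[OF _ _ _ mu1 X2]) (simp_all add: a_def b_def X_def)
    also have "\<dots> = (\<mu> * norm (u - v0))\<^sup>2" using uv0 by (simp add: power_mult_distrib)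
    finally have sq: "(b + X)\<^sup>2 \<le> (\<mu> * norm (u - v0))\<^sup>2" .
    have "0 \<le> \<mu> * norm (u - v0)" using mu1 by simp
    with sq have "b + X \<le> \<mu> * norm (u - v0)" by (rule power2_le_imp_le)
    moreover have "norm (u - x) \<le> b + X" unfolding ux b_def X_def by (rule norm_triangle_ineq)
    ultimately show ?thesis by (simp add: dist_norm)
  qed
  have mu0: "0 < \<mu>" using mu1 by simp
  have "norm (u - x) / \<mu> \<le> infdist u ?VK"
  proof (rule le_infdist_lemma[OF VKne])
    fix a assume "a \<in> ?VK"
    hence "norm (u - x) \<le> \<mu> * dist u a" by (rule main)
    thus "norm (u - x) / \<mu> \<le> dist u a" using mu0 by (simp add: pos_divide_le_eq mult_ac)
  qed
  thus ?thesis using mu0 \<mu>_def by (simp add: pos_divide_le_eq mult_ac)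
qed

end

lemma delta_bound:
  fixes M W :: "'a::real_inner set"
  assumes cM: "compact M" and uM: "u \<in> M" and xs: "infdist x M \<le> s"
    and perp: "u - x \<in> orthogonal_comp W"
  shows "norm (u - x) \<le> delta M W s"
proof -
  have s0: "0 \<le> s" using xs infdist_nonneg order_trans by blast
  have Mne: "M \<noteq> {}" using uM by blast
  obtain B where B: "\<And>m. m \<in> M \<Longrightarrow> norm m \<le> B"
    using compact_imp_bounded[OF cM] bounded_iff by metis
  have nb: "norm v \<le> B + s + 1" if "v \<in> M_sigma M s" for v
  proof -
    have vs: "infdist v M \<le> s" using that by (simp add: M_sigma_def)
    have "\<exists>m\<in>M. dist v m < s + 1"
    proof (rule ccontr)
      assume "\<not> ?thesis"
      hence "s + 1 \<le> infdist v M" using Mne by (intro le_infdist_lemma) auto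
      thus False using vs by simp
    qed
    then obtain m where m: "m \<in> M" "dist v m < s + 1" by blast
    have "norm v \<le> norm m + norm (v - m)" by (metis add.commute diff_add_cancel norm_triangle_ineq)
    thus ?thesis using B[OF m(1)] m(2) by (simp add: dist_norm)
  qed
  let ?S = "{norm (u - v) | u v. u \<in> M_sigma M s \<and> v \<in> M_sigma M s \<and> u - v \<in> orthogonal_comp W}"
  have bdd: "bdd_above ?S"
  proof (rule bdd_aboveI[where M="2 * (B + s + 1)"])
    fix t assume "t \<in> ?S"
    then obtain a b where ab: "t = norm (a - b)" "a \<in> M_sigma M s" "b \<in> M_sigma M s" by blast
    have "norm (a - b) \<le> norm a + norm b" by (rule norm_triangle_ineq4)
    thus "t \<le> 2 * (B + s + 1)" using nb[OF ab(2)] nb[OF ab(3)] ab(1) by simp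
  qed
  have "u \<in> M_sigma M s" using uM s0 by (simp add: M_sigma_def)
  moreover have "x \<in> M_sigma M s" using xs by (simp add: M_sigma_def)
  ultimately have "norm (u - x) \<in> ?S" using perp by blast
  thus ?thesis unfolding delta_def using bdd by (rule cSup_upper)
qed

theorem mainTheorem14:
  fixes M W :: "'a::{real_inner, complete_space} set"
    and K :: nat and ubar :: "nat \<Rightarrow> 'a" and Vbar :: "nat \<Rightarrow> 'a set"
    and \<sigma> :: real and ustar :: "nat \<Rightarrow> 'a \<Rightarrow> 'a"
  assumes "compact M"
    and "K \<ge> 1"
    and "\<sigma> > 0"
    and "sigma_admissible M W K ubar Vbar \<sigma>"
    and "\<forall>k\<in>{1..K}. \<forall>w\<in>W. is_PBDW W ((\<lambda>x. ubar k + x) ` Vbar k) w (ustar k w)"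
  shows
    "(\<forall>kstar :: 'a \<Rightarrow> nat.
        (\<forall>w\<in>W. kstar w \<in> {1..K} \<and>
           (\<forall>k\<in>{1..K}. infdist (ustar (kstar w) w) M \<le> infdist (ustar k w) M)) \<longrightarrow>
        (\<forall>u\<in>M. norm (u - ustar (kstar (orth_proj W u)) (orth_proj W u)) \<le> delta M W \<sigma>))
     \<and>
     (\<forall>(S :: 'a \<Rightarrow> real) (r :: real) (R :: real) (kstar :: 'a \<Rightarrow> nat).
        0 < r \<and> r \<le> R \<and> (\<forall>v. 0 \<le> S v) \<and>
        (\<forall>v. r * infdist v M \<le> S v \<and> S v \<le> R * infdist v M) \<and>
        (\<forall>w\<in>W. kstar w \<in> {1..K} \<and>
           (\<forall>k\<in>{1..K}. S (ustar (kstar w) w) \<le> S (ustar k w))) \<longrightarrow>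
        (\<forall>u\<in>M. norm (u - ustar (kstar (orth_proj W u)) (orth_proj W u))
                 \<le> delta M W ((R / r) * \<sigma>)))"
proof -
  note adm = assms(4)[unfolded sigma_admissible_def]
  obtain m where m: "fin_dim_subspace W m \<and>
        (\<forall>k\<in>{1..K}. (\<exists>n\<le>m. fin_dim_subspace (Vbar k) n) \<and>
                     Vbar k \<inter> orthogonal_comp W = {0})"
    using conjunct1[OF adm] by (rule exE)
  have fdW: "fin_dim_subspace W m" using m by (rule conjunct1)
  have hk: "\<And>k. k \<in> {1..K} \<Longrightarrow> (\<exists>n\<le>m. fin_dim_subspace (Vbar k) n) \<and> Vbar k \<inter> orthogonal_comp W = {0}"
    using m by simp
  obtain Mk :: "nat \<Rightarrow> 'a set" where "\<exists>eps :: nat \<Rightarrow> real.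
        (\<Union>k\<in>{1..K}. Mk k) = M \<and> disjoint_family_on Mk {1..K} \<and>
        (\<forall>k\<in>{1..K}. (\<forall>u\<in>Mk k. infdist u ((\<lambda>x. ubar k + x) ` Vbar k) \<le> eps k) \<and>
                     mu (Vbar k) W * eps k \<le> \<sigma>)"
    using conjunct2[OF adm] by (rule exE)
  then obtain eps :: "nat \<Rightarrow> real" where H: "(\<Union>k\<in>{1..K}. Mk k) = M \<and> disjoint_family_on Mk {1..K} \<and>
        (\<forall>k\<in>{1..K}. (\<forall>u\<in>Mk k. infdist u ((\<lambda>x. ubar k + x) ` Vbar k) \<le> eps k) \<and>
                     mu (Vbar k) W * eps k \<le> \<sigma>)" by (rule exE)
  have MU: "(\<Union>k\<in>{1..K}. Mk k) = M" using H by (rule conjunct1)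
  have he: "\<And>k. k \<in> {1..K} \<Longrightarrow> (\<forall>u\<in>Mk k. infdist u ((\<lambda>x. ubar k + x) ` Vbar k) \<le> eps k) \<and>
                     mu (Vbar k) W * eps k \<le> \<sigma>"
    using H by simp
  obtain TW where TW: "finite TW" "W = span TW"
    using fdW unfolding fin_dim_subspace_def by blast
  interpret fdsub W TW using TW by unfold_locales
  let ?P = "orth_proj W"
  have perpk: "u - ustar k (?P u) \<in> orthogonal_comp W" if k: "k \<in> {1..K}" for u k
  proof -
    have "is_PBDW W ((\<lambda>x. ubar k + x) ` Vbar k) (?P u) (ustar k (?P u))"
      using assms(5) k P_in by blast
    then obtain y where y: "y \<in> orthogonal_comp W" "ustar k (?P u) = ?P u + y"
      unfolding is_PBDW_def by blast
    have eq: "u - ustar k (?P u) = (u - ?P u) - y" using y by simp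
    have "(u - ?P u) - y \<in> orthogonal_comp W" by (rule subspace_diff[OF subspace_orthogonal_comp P_perp y(1)])
    thus ?thesis by (simp only: eq)
  qed
  have good: "\<exists>k\<in>{1..K}. infdist (ustar k (?P u)) M \<le> \<sigma>" if uM: "u \<in> M" for u
  proof -
    have "u \<in> (\<Union>k\<in>{1..K}. Mk k)" using uM MU by simp
    then obtain k where k: "k \<in> {1..K}" "u \<in> Mk k" by (rule UN_E)
    obtain n where "n \<le> m \<and> fin_dim_subspace (Vbar k) n"
      using conjunct1[OF hk[OF k(1)]] by (rule exE)
    hence fdV: "fin_dim_subspace (Vbar k) n" by (rule conjunct2)
    have inter: "Vbar k \<inter> orthogonal_comp W = {0}" using hk[OF k(1)] by (rule conjunct2)
    obtain B where B: "finite B" "Vbar k = span B" using fdV unfolding fin_dim_subspace_def by blast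
    have pb: "is_PBDW W ((\<lambda>x. ubar k + x) ` Vbar k) (?P u) (ustar k (?P u))"
      using bspec[OF bspec[OF assms(5) k(1)] P_in] .
    have "norm (u - ustar k (?P u)) \<le> mu (Vbar k) W * infdist u ((\<lambda>x. ubar k + x) ` Vbar k)"
      by (rule core[OF B inter pb])
    also have "\<dots> \<le> mu (Vbar k) W * eps k"
      using he[OF k(1)] k(2) mu_bound(2)[OF B inter] by (intro mult_left_mono) auto
    also have "\<dots> \<le> \<sigma>" using he[OF k(1)] by blast
    finally have "norm (u - ustar k (?P u)) \<le> \<sigma>" .
    moreover have "infdist (ustar k (?P u)) M \<le> dist (ustar k (?P u)) u" using uM by (rule infdist_le)
    moreover have "dist (ustar k (?P u)) u = norm (u - ustar k (?P u))" by (simp add: dist_norm norm_minus_commute)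
    ultimately have "infdist (ustar k (?P u)) M \<le> \<sigma>" by linarith
    thus ?thesis using k(1) by blast
  qed
  show ?thesis
  proof (intro conjI allI impI ballI)
    fix kstar :: "'a \<Rightarrow> nat" and u
    assume ks: "\<forall>w\<in>W. kstar w \<in> {1..K} \<and>
           (\<forall>k\<in>{1..K}. infdist (ustar (kstar w) w) M \<le> infdist (ustar k w) M)"
      and uM: "u \<in> M"
    obtain k where k: "k \<in> {1..K}" "infdist (ustar k (?P u)) M \<le> \<sigma>" using good[OF uM] by blast
    have ksP: "kstar (?P u) \<in> {1..K} \<and>
           (\<forall>k\<in>{1..K}. infdist (ustar (kstar (?P u)) (?P u)) M \<le> infdist (ustar k (?P u)) M)"
      using ks P_in[of u] by (rule bspec)
    have "infdist (ustar (kstar (?P u)) (?P u)) M \<le> infdist (ustar k (?P u)) M"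
      using conjunct2[OF ksP] k(1) by (rule bspec)
    hence "infdist (ustar (kstar (?P u)) (?P u)) M \<le> \<sigma>" using k(2) by linarith
    moreover have "u - ustar (kstar (?P u)) (?P u) \<in> orthogonal_comp W" using perpk conjunct1[OF ksP] by blast
    ultimately show "norm (u - ustar (kstar (?P u)) (?P u)) \<le> delta M W \<sigma>"
      by (intro delta_bound[OF assms(1) uM])
  next
    fix S :: "'a \<Rightarrow> real" and r R :: real and kstar :: "'a \<Rightarrow> nat" and u
    assume A: "0 < r \<and> r \<le> R \<and> (\<forall>v. 0 \<le> S v) \<and>
        (\<forall>v. r * infdist v M \<le> S v \<and> S v \<le> R * infdist v M) \<and>
        (\<forall>w\<in>W. kstar w \<in> {1..K} \<and>
           (\<forall>k\<in>{1..K}. S (ustar (kstar w) w) \<le> S (ustar k w)))"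
      and uM: "u \<in> M"
    obtain k where k: "k \<in> {1..K}" "infdist (ustar k (?P u)) M \<le> \<sigma>" using good[OF uM] by blast
    let ?x = "ustar (kstar (?P u)) (?P u)"
    from A have r0: "0 < r" by (rule conjunct1)
    from A have rR: "r \<le> R" by blast
    from A have Sb: "\<forall>v. r * infdist v M \<le> S v \<and> S v \<le> R * infdist v M" by blast
    from A have kS: "\<forall>w\<in>W. kstar w \<in> {1..K} \<and>
           (\<forall>k\<in>{1..K}. S (ustar (kstar w) w) \<le> S (ustar k w))" by blast
    have R0: "0 \<le> R" using r0 rR by linarith
    have ksP: "kstar (?P u) \<in> {1..K} \<and> (\<forall>k\<in>{1..K}. S ?x \<le> S (ustar k (?P u)))"
      using kS P_in[of u] by (rule bspec)
    have "r * infdist ?x M \<le> S ?x" using Sb by blast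
    also have "\<dots> \<le> S (ustar k (?P u))" using conjunct2[OF ksP] k(1) by (rule bspec)
    also have "\<dots> \<le> R * infdist (ustar k (?P u)) M" using Sb by blast
    also have "\<dots> \<le> R * \<sigma>" using k(2) R0 by (rule mult_left_mono)
    finally have "r * infdist ?x M \<le> R * \<sigma>" .
    hence "infdist ?x M \<le> R / r * \<sigma>" using r0 by (simp add: pos_le_divide_eq mult_ac)
    moreover have "u - ?x \<in> orthogonal_comp W" using perpk conjunct1[OF ksP] by blast
    ultimately show "norm (u - ?x) \<le> delta M W (R / r * \<sigma>)"
      by (intro delta_bound[OF assms(1) uM])
  qed
qed

end
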